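(* Let $G=(V,E)$ and $G'=(V,E')$ be undirected graphs on the same finite vertex set $V$, in which every vertex has at least one neighbour, and let $\delta=(E\setminus E')\cup(E'\setminus E)$ be the set of inserted and deleted edges. Let $A\subseteq V$ be the set of endpoints of edges in $\delta$. Consider a random walk model of order at most two: for a graph $H$, a walk $(v_0,\dots,v_{l-1})$ started at a fixed vertex $v_0$ is generated by drawing $v_1$ from a distribution $P_H(\cdot\mid v_0)$ and, for $j\ge 1$, $v_{j+1}$ from $P_H(\cdot\mid v_{j-1},v_j)$, where $P_H(\cdot\mid v_0)$ depends on $H$ only through $N_H(v_0)$ and $P_H(\cdot\mid t,v)$ depends on $H$ only through $N_H(t)$ and $N_H(v)$ (for instance DeepWalk: uniform over $N_H(v)$; or node2vec). Let $\mathcal{W}=(w_1,\dots,w_m)$ be a walk corpus on $G$, i.e.\ independent walks of length $l$ generated on $G$ from prescribed start vertices. Form $\mathcal{W}'$ as follows: for each walk $w_i=(v_0,\dots,v_{l-1})$, if no $v_j$ lies in $A$ keep $w_i$ unchanged; otherwise let $p_{\min}$ be the least $j$ with $v_j\in A$, keep $v_0,\dots,v_{p_{\min}}$ and resample $v_{p_{\min}+1},\dots,v_{l-1}$ sequentially according to the model on $G'$ (independently across walks). Then $\mathcal{W}'$ has the same joint distribution as a walk corpus generated from scratch on $G'$ from the same start vertices; i.e.\ $\mathcal{W}'$ is statistically indistinguishable.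
   Context: $N_H(v)$ denotes the set of neighbours of $v$ in $H$. A walk corpus is a collection of random walks; "statistically indistinguishable" means that the corpus obtained by updating an existing corpus after a graph update is equi-probable (has the same distribution) as a corpus generated from scratch on the updated graph. *)

theory Defs
  imports "HOL-Probability.Probability_Mass_Function"
begin

definition ugraph :: "'v set \<Rightarrow> 'v set set \<Rightarrow> bool" where
  "ugraph V E \<longleftrightarrow> (\<forall>e\<in>E. \<exists>u v. e = {u, v} \<and> u \<noteq> v \<and> u \<in> V \<and> v \<in> V)"

definition nbrs :: "'v set set \<Rightarrow> 'v \<Rightarrow> 'v set" where
  "nbrs E v = {u. {u, v} \<in> E}"

text \<open>The graph H enters only via the neighbourhood function nbrs H.\<close>

definition walk_step ::
  "('v \<Rightarrow> 'v set \<Rightarrow> 'v pmf) \<Rightarrow> ('v \<Rightarrow> 'v \<Rightarrow> 'v set \<Rightarrow> 'v set \<Rightarrow> 'v pmf)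
   \<Rightarrow> 'v set set \<Rightarrow> 'v list \<Rightarrow> 'v pmf" where
  "walk_step P1 P2 H w =
     (if length w = 1 then P1 (hd w) (nbrs H (hd w))
      else (let t = w ! (length w - 2); v = last w in P2 t v (nbrs H t) (nbrs H v)))"

fun walk_extend ::
  "('v \<Rightarrow> 'v set \<Rightarrow> 'v pmf) \<Rightarrow> ('v \<Rightarrow> 'v \<Rightarrow> 'v set \<Rightarrow> 'v set \<Rightarrow> 'v pmf)
   \<Rightarrow> 'v set set \<Rightarrow> nat \<Rightarrow> 'v list \<Rightarrow> 'v list pmf" where
  "walk_extend P1 P2 H 0 w = return_pmf w"
| "walk_extend P1 P2 H (Suc k) w =
     bind_pmf (walk_step P1 P2 H w) (\<lambda>x. walk_extend P1 P2 H k (w @ [x]))"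

definition gen_walk ::
  "('v \<Rightarrow> 'v set \<Rightarrow> 'v pmf) \<Rightarrow> ('v \<Rightarrow> 'v \<Rightarrow> 'v set \<Rightarrow> 'v set \<Rightarrow> 'v pmf)
   \<Rightarrow> 'v set set \<Rightarrow> nat \<Rightarrow> 'v \<Rightarrow> 'v list pmf" where
  "gen_walk P1 P2 H l v0 = walk_extend P1 P2 H (l - 1) [v0]"

fun indep_list :: "'a pmf list \<Rightarrow> 'a list pmf" where
  "indep_list [] = return_pmf []"
| "indep_list (p # ps) = bind_pmf p (\<lambda>x. bind_pmf (indep_list ps) (\<lambda>xs. return_pmf (x # xs)))"

definition gen_corpus ::
  "('v \<Rightarrow> 'v set \<Rightarrow> 'v pmf) \<Rightarrow> ('v \<Rightarrow> 'v \<Rightarrow> 'v set \<Rightarrow> 'v set \<Rightarrow> 'v pmf)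
   \<Rightarrow> 'v set set \<Rightarrow> nat \<Rightarrow> 'v list \<Rightarrow> 'v list list pmf" where
  "gen_corpus P1 P2 H l starts = indep_list (map (gen_walk P1 P2 H l) starts)"

definition update_walk ::
  "('v \<Rightarrow> 'v set \<Rightarrow> 'v pmf) \<Rightarrow> ('v \<Rightarrow> 'v \<Rightarrow> 'v set \<Rightarrow> 'v set \<Rightarrow> 'v pmf)
   \<Rightarrow> 'v set set \<Rightarrow> 'v set \<Rightarrow> 'v list \<Rightarrow> 'v list pmf" where
  "update_walk P1 P2 H' A w =
     (if \<forall>j<length w. w ! j \<notin> A then return_pmf w
      else (let p = (LEAST j. j < length w \<and> w ! j \<in> A)
            in walk_extend P1 P2 H' (length w - 1 - p) (take (p + 1) w)))"

definition update_corpus ::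
  "('v \<Rightarrow> 'v set \<Rightarrow> 'v pmf) \<Rightarrow> ('v \<Rightarrow> 'v \<Rightarrow> 'v set \<Rightarrow> 'v set \<Rightarrow> 'v pmf)
   \<Rightarrow> 'v set set \<Rightarrow> 'v set \<Rightarrow> 'v list list \<Rightarrow> 'v list list pmf" where
  "update_corpus P1 P2 H' A ws = indep_list (map (update_walk P1 P2 H' A) ws)"

end

theory Submission
  imports Defs
begin

lemma nbrs_same:
  assumes "v \<notin> \<Union>((E - E') \<union> (E' - E))"
  shows "nbrs E v = nbrs E' v"
proof -
  have "\<And>u. {u, v} \<in> E \<longleftrightarrow> {u, v} \<in> E'"
  proof -
    fix u
    have "v \<in> {u, v}" by simp
    then show "{u, v} \<in> E \<longleftrightarrow> {u, v} \<in> E'" using assms by blast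
  qed
  then show ?thesis unfolding nbrs_def by simp
qed

lemma step_same:
  assumes "w \<noteq> []" "\<forall>x\<in>set w. x \<notin> \<Union>((E - E') \<union> (E' - E))"
  shows "walk_step P1 P2 E w = walk_step P1 P2 E' w"
proof (cases "length w = 1")
  case True
  have "hd w \<in> set w" using assms(1) by simp
  then have "nbrs E (hd w) = nbrs E' (hd w)" using assms(2) nbrs_same by metis
  then show ?thesis using True unfolding walk_step_def by simp
next
  case False
  then have "length w \<ge> 2" using assms(1) by (cases w) (auto simp: Suc_le_eq)
  then have "w ! (length w - 2) \<in> set w" by simp
  then have 1: "nbrs E (w ! (length w - 2)) = nbrs E' (w ! (length w - 2))"
    using assms(2) nbrs_same by metis
  have "last w \<in> set w" using assms(1) by simp
  then have 2: "nbrs E (last w) = nbrs E' (last w)" using assms(2) nbrs_same by metis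
  show ?thesis using False 1 2 unfolding walk_step_def Let_def by simp
qed

lemma extend_set:
  "y \<in> set_pmf (walk_extend P1 P2 H k u) \<Longrightarrow> \<exists>r. y = u @ r \<and> length r = k"
proof (induction k arbitrary: u)
  case 0
  then show ?case by simp
next
  case (Suc k)
  then obtain x where "y \<in> set_pmf (walk_extend P1 P2 H k (u @ [x]))" by auto
  from Suc.IH[OF this] obtain r where "y = u @ [x] @ r" "length r = k" by auto
  then show ?case by (intro exI[of _ "[x] @ r"]) auto
qed

lemma dirty:
  assumes "u \<noteq> []" "last u \<in> A" "\<forall>x\<in>set (butlast u). x \<notin> A"
  shows "bind_pmf (walk_extend P1 P2 E k u) (update_walk P1 P2 E' A) = walk_extend P1 P2 E' k u"
proof -
  have "bind_pmf (walk_extend P1 P2 E k u) (update_walk P1 P2 E' A)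
      = bind_pmf (walk_extend P1 P2 E k u) (\<lambda>_. walk_extend P1 P2 E' k u)"
  proof (rule bind_pmf_cong[OF refl])
    fix y assume "y \<in> set_pmf (walk_extend P1 P2 E k u)"
    from extend_set[OF this] obtain r where y: "y = u @ r" "length r = k" by auto
    have lu: "(u @ r) ! (length u - 1) = last u" using assms(1)
      by (simp add: nth_append last_conv_nth)
    have notall: "\<not> (\<forall>j<length y. y ! j \<notin> A)"
    proof
      assume "\<forall>j<length y. y ! j \<notin> A"
      moreover have "length u - 1 < length y" using y assms(1) by (cases u) auto
      ultimately show False using y lu assms(2) by auto
    qed
    have least: "(LEAST j. j < length y \<and> y ! j \<in> A) = length u - 1"
    proof (rule Least_equality)
      show "length u - 1 < length y \<and> y ! (length u - 1) \<in> A"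
        using y lu assms(1,2) by (cases u) auto
    next
      fix j assume j: "j < length y \<and> y ! j \<in> A"
      show "length u - 1 \<le> j"
      proof (rule ccontr)
        assume "\<not> length u - 1 \<le> j"
        then have "j < length (butlast u)" by simp
        then have "butlast u ! j \<in> set (butlast u)" by simp
        moreover have "butlast u ! j = y ! j" using \<open>j < length (butlast u)\<close> y
          by (auto simp: nth_append nth_butlast)
        ultimately show False using j assms(3) by auto
      qed
    qed
    have "take (length u - 1 + 1) y = u" using y assms(1) by simp
    moreover have "length y - 1 - (length u - 1) = k" using y assms(1) by (cases u) auto
    ultimately show "update_walk P1 P2 E' A y = walk_extend P1 P2 E' k u"
      unfolding update_walk_def if_not_P[OF notall] Let_def least by (simp only:)
  qed
  then show ?thesis by (simp only: bind_pmf_const)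
qed

lemma clean:
  assumes "u \<noteq> []" "\<forall>x\<in>set u. x \<notin> \<Union>((E - E') \<union> (E' - E))"
  shows "bind_pmf (walk_extend P1 P2 E k u) (update_walk P1 P2 E' (\<Union>((E - E') \<union> (E' - E))))
         = walk_extend P1 P2 E' k u"
  using assms
proof (induction k arbitrary: u)
  case 0
  have "\<forall>j<length u. u ! j \<notin> \<Union>((E - E') \<union> (E' - E))"
    using "0.prems"(2) by (metis nth_mem)
  then show ?case unfolding walk_extend.simps bind_return_pmf update_walk_def
    by (rule if_P)
next
  case (Suc k)
  let ?A = "\<Union>((E - E') \<union> (E' - E))"
  have "bind_pmf (walk_extend P1 P2 E (Suc k) u) (update_walk P1 P2 E' ?A)
      = bind_pmf (walk_step P1 P2 E u) (\<lambda>x. bind_pmf (walk_extend P1 P2 E k (u @ [x])) (update_walk P1 P2 E' ?A))"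
    by (simp add: bind_assoc_pmf)
  also have "\<dots> = bind_pmf (walk_step P1 P2 E' u) (\<lambda>x. walk_extend P1 P2 E' k (u @ [x]))"
  proof (rule bind_pmf_cong)
    show "walk_step P1 P2 E u = walk_step P1 P2 E' u" using step_same Suc.prems by blast
  next
    fix x
    show "bind_pmf (walk_extend P1 P2 E k (u @ [x])) (update_walk P1 P2 E' ?A) = walk_extend P1 P2 E' k (u @ [x])"
    proof (cases "x \<in> ?A")
      case True
      have b: "\<forall>y\<in>set (butlast (u @ [x])). y \<notin> ?A"
        unfolding butlast_snoc using Suc.prems(2) by assumption
      have l: "last (u @ [x]) \<in> ?A" unfolding last_snoc by (rule True)
      have n: "u @ [x] \<noteq> []" by simp
      show ?thesis using n l b by (rule dirty)
    next
      case False
      have b: "\<forall>y\<in>set (u @ [x]). y \<notin> ?A"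
      proof
        fix y assume "y \<in> set (u @ [x])"
        then have "y \<in> set u \<or> y = x" by auto
        then show "y \<notin> ?A"
        proof
          assume "y \<in> set u" with Suc.prems(2) show ?thesis by (rule bspec)
        next
          assume "y = x" then show ?thesis using False by (simp only:) (rule notI)
        qed
      qed
      have n: "u @ [x] \<noteq> []" by simp
      show ?thesis using n b by (rule Suc.IH)
    qed
  qed
  finally show ?case by simp
qed

lemma walk_ok:
  "bind_pmf (gen_walk P1 P2 E l v0) (update_walk P1 P2 E' (\<Union>((E - E') \<union> (E' - E))))
   = gen_walk P1 P2 E' l v0"
  unfolding gen_walk_def
proof (cases "v0 \<in> \<Union>((E - E') \<union> (E' - E))")
  case True
  show "bind_pmf (walk_extend P1 P2 E (l - 1) [v0]) (update_walk P1 P2 E' (\<Union>((E - E') \<union> (E' - E))))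
   = walk_extend P1 P2 E' (l - 1) [v0]"
  proof (rule dirty)
    show "[v0] \<noteq> []" by simp
    show "last [v0] \<in> \<Union>((E - E') \<union> (E' - E))" unfolding last_ConsL[OF refl] by (rule True)
    show "\<forall>x\<in>set (butlast [v0]). x \<notin> \<Union>((E - E') \<union> (E' - E))" by simp
  qed
next
  case False
  show "bind_pmf (walk_extend P1 P2 E (l - 1) [v0]) (update_walk P1 P2 E' (\<Union>((E - E') \<union> (E' - E))))
   = walk_extend P1 P2 E' (l - 1) [v0]"
  proof (rule clean)
    show "[v0] \<noteq> []" by simp
    show "\<forall>x\<in>set [v0]. x \<notin> \<Union>((E - E') \<union> (E' - E))"
      using False by (simp only: list.set empty_iff ball_simps insert_iff simp_thms)
  qed
qed

lemma indep_bind: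
  "bind_pmf (indep_list (map g xs)) (\<lambda>ws. indep_list (map h ws))
   = indep_list (map (\<lambda>x. bind_pmf (g x) h) xs)"
proof (induction xs)
  case Nil
  then show ?case by (simp add: bind_return_pmf)
next
  case (Cons a as)
  have "bind_pmf (indep_list (map g (a # as))) (\<lambda>ws. indep_list (map h ws))
     = bind_pmf (g a) (\<lambda>x. bind_pmf (indep_list (map g as)) (\<lambda>xs.
         bind_pmf (h x) (\<lambda>y. bind_pmf (indep_list (map h xs)) (\<lambda>ys. return_pmf (y # ys)))))"
    by (simp add: bind_assoc_pmf bind_return_pmf)
  also have "\<dots> = bind_pmf (g a) (\<lambda>x. bind_pmf (h x) (\<lambda>y. bind_pmf (indep_list (map g as)) (\<lambda>xs.
         bind_pmf (indep_list (map h xs)) (\<lambda>ys. return_pmf (y # ys)))))"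
    by (subst bind_commute_pmf) (rule refl)
  also have "\<dots> = bind_pmf (g a) (\<lambda>x. bind_pmf (h x) (\<lambda>y.
         bind_pmf (indep_list (map (\<lambda>x. bind_pmf (g x) h) as)) (\<lambda>ys. return_pmf (y # ys))))"
    by (simp add: bind_assoc_pmf[symmetric] Cons.IH)
  also have "\<dots> = indep_list (map (\<lambda>x. bind_pmf (g x) h) (a # as))"
    by (simp add: bind_assoc_pmf)
  finally show ?case .
qed

theorem mainTheorem4:
  fixes V :: "'v set" and E E' :: "'v set set"
    and P1 :: "'v \<Rightarrow> 'v set \<Rightarrow> 'v pmf"
    and P2 :: "'v \<Rightarrow> 'v \<Rightarrow> 'v set \<Rightarrow> 'v set \<Rightarrow> 'v pmf"
    and l :: nat and starts :: "'v list"
  assumes "finite V"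
    and "ugraph V E" and "ugraph V E'"
    and "\<forall>v\<in>V. nbrs E v \<noteq> {}" and "\<forall>v\<in>V. nbrs E' v \<noteq> {}"
    and "l \<ge> 1"
    and "set starts \<subseteq> V"
  shows "bind_pmf (gen_corpus P1 P2 E l starts)
           (update_corpus P1 P2 E' (\<Union>((E - E') \<union> (E' - E))))
         = gen_corpus P1 P2 E' l starts"
proof -
  have "bind_pmf (gen_corpus P1 P2 E l starts)
           (update_corpus P1 P2 E' (\<Union>((E - E') \<union> (E' - E))))
      = indep_list (map (\<lambda>x. bind_pmf (gen_walk P1 P2 E l x)
           (update_walk P1 P2 E' (\<Union>((E - E') \<union> (E' - E))))) starts)"
    unfolding gen_corpus_def update_corpus_def by (rule indep_bind)
  also have "\<dots> = gen_corpus P1 P2 E' l starts"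
    unfolding gen_corpus_def walk_ok by (rule refl)
  finally show ?thesis .
qed

end
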